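(* Let $\mathfrak g\neq\{0\}$ be a profinite-dimensional $\mathbb K$-Lie algebra. Then the weakly complete symmetric Hopf algebra $\mathbf U(\mathfrak g)$ contains grouplike elements different from the identity $1$.
   Context: $\mathbb K\in\{\mathbb R,\mathbb C\}$. A topological $\mathbb K$-vector space is weakly complete if it is isomorphic to a power $\mathbb K^J$ (with the product topology). A weakly complete unital algebra is a unital associative $\mathbb K$-algebra with a topology making it a weakly complete vector space with continuous multiplication; $[A]$ is $A$ with bracket $[x,y]=xy-yx$. A topological Lie algebra $\mathfrak g$ is profinite-dimensional if $\mathfrak g\cong\lim_{I}\mathfrak g/I$ over the closed ideals $I$ with $\dim\mathfrak g/I<\infty$. $\mathbf U(\mathfrak g)$ is the weakly complete enveloping algebra: a weakly complete unital algebra with a continuous Lie morphism $\lambda_{\mathfrak g}\colon\mathfrak g\to[\mathbf U(\mathfrak g)]$ (a closed embedding) such that every continuous Lie morphism $\mathfrak g\to[A]$ into a weakly complete unital algebra $A$ factors uniquely through a continuous unital algebra morphism $\mathbf U(\mathfrak g)\to A$. $\otimes_{\mathcal W}$ is the tensor product in the category of weakly complete vector spaces (for which $\mathbb K^X\otimes_{\mathcal W}\mathbb K^Y\cong\mathbb K^{X\times Y}$). $\mathbf U(\mathfrak g)$ is a weakly complete symmetric Hopf algebra with comultiplication $\gamma_{\mathfrak g}\colon\mathbf U(\mathfrak g)\to\mathbf U(\mathfrak g)\otimes_{\mathcal W}\mathbf U(\mathfrak g)$ the unique continuous algebra morphism with $\gamma_{\mathfrak g}(x)=x\otimes1+1\otimes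 x$ for $x\in\mathfrak g$, and counit $k\colon\mathbf U(\mathfrak g)\to\mathbb K$ the unique continuous unital algebra morphism vanishing on $\mathfrak g$. An element $a$ is grouplike if $\gamma_{\mathfrak g}(a)=a\otimes a$ and $k(a)=1$. *)

theory Defs
  imports "HOL-Analysis.Analysis"
begin

record ('k,'v) tvs =
  carr  :: "'v set"
  vadd  :: "'v \<Rightarrow> 'v \<Rightarrow> 'v"
  vzero :: 'v
  smul  :: "'k \<Rightarrow> 'v \<Rightarrow> 'v"
  topo  :: "'v topology"

record ('k,'v) talg = "('k,'v) tvs" +
  amul :: "'v \<Rightarrow> 'v \<Rightarrow> 'v"
  aone :: 'v

record ('k,'v) tlie = "('k,'v) tvs" +
  brk :: "'v \<Rightarrow> 'v \<Rightarrow> 'v"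

definition vsub :: "('k::field,'v,'z) tvs_scheme \<Rightarrow> 'v \<Rightarrow> 'v \<Rightarrow> 'v" where
  "vsub V x y = vadd V x (smul V (-1) y)"

definition vector_space_on :: "('k::field,'v,'z) tvs_scheme \<Rightarrow> bool" where
  "vector_space_on V \<longleftrightarrow>
     vzero V \<in> carr V \<and>
     (\<forall>x\<in>carr V. \<forall>y\<in>carr V. vadd V x y \<in> carr V) \<and>
     (\<forall>c. \<forall>x\<in>carr V. smul V c x \<in> carr V) \<and>
     (\<forall>x\<in>carr V. \<forall>y\<in>carr V. \<forall>z\<in>carr V. vadd V (vadd V x y) z = vadd V x (vadd V y z)) \<and>
     (\<forall>x\<in>carr V. \<forall>y\<in>carr V. vadd V x y = vadd V y x) \<and>
     (\<forall>x\<in>carr V. vadd V x (vzero V) = x) \<and>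
     (\<forall>x\<in>carr V. vadd V x (smul V (-1) x) = vzero V) \<and>
     (\<forall>c. \<forall>x\<in>carr V. \<forall>y\<in>carr V. smul V c (vadd V x y) = vadd V (smul V c x) (smul V c y)) \<and>
     (\<forall>c d. \<forall>x\<in>carr V. smul V (c + d) x = vadd V (smul V c x) (smul V d x)) \<and>
     (\<forall>c d. \<forall>x\<in>carr V. smul V (c * d) x = smul V c (smul V d x)) \<and>
     (\<forall>x\<in>carr V. smul V 1 x = x)"

definition tvs :: "('k::{real_normed_field},'v,'z) tvs_scheme \<Rightarrow> bool" where
  "tvs V \<longleftrightarrow> vector_space_on V \<and> topspace (topo V) = carr V \<and>
     continuous_map (prod_topology (topo V) (topo V)) (topo V) (\<lambda>(x,y). vadd V x y) \<and>
     continuous_map (prod_topology euclidean (topo V)) (topo V) (\<lambda>(c,x). smul V c x)"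

definition linear_on :: "('k::field,'v,'z) tvs_scheme \<Rightarrow> ('k,'w,'y) tvs_scheme \<Rightarrow> ('v \<Rightarrow> 'w) \<Rightarrow> bool" where
  "linear_on V W f \<longleftrightarrow> (\<forall>x\<in>carr V. f x \<in> carr W) \<and>
     (\<forall>x\<in>carr V. \<forall>y\<in>carr V. f (vadd V x y) = vadd W (f x) (f y)) \<and>
     (\<forall>c. \<forall>x\<in>carr V. f (smul V c x) = smul W c (f x))"

definition power_space :: "'j set \<Rightarrow> ('k::real_normed_field, 'j \<Rightarrow> 'k) tvs" where
  "power_space J = \<lparr> carr = PiE J (\<lambda>_. UNIV),
                      vadd = (\<lambda>f g. \<lambda>j\<in>J. f j + g j),
                      vzero = (\<lambda>j\<in>J. 0),
                      smul = (\<lambda>c f. \<lambda>j\<in>J. c * f j),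
                      topo = product_topology (\<lambda>_. euclidean) J \<rparr>"

text \<open>Weakly complete: isomorphic (as topological vector space) to some K^J.
  The index set J can always be taken inside the carrier type, since |J| <= |K^J|.\<close>
definition weakly_complete :: "('k::real_normed_field,'v,'z) tvs_scheme \<Rightarrow> bool" where
  "weakly_complete V \<longleftrightarrow> tvs V \<and>
     (\<exists>(J::'v set) f. linear_on V (power_space J) f \<and>
        bij_betw f (carr V) (carr (power_space J)) \<and>
        homeomorphic_map (topo V) (topo (power_space J)) f)"

definition wc_algebra :: "('k::real_normed_field,'v,'z) talg_scheme \<Rightarrow> bool" where
  "wc_algebra A \<longleftrightarrow> weakly_complete A \<and> aone A \<in> carr A \<and>
     (\<forall>x\<in>carr A. \<forall>y\<in>carr A. amul A x y \<in> carr A) \<and>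
     (\<forall>x\<in>carr A. \<forall>y\<in>carr A. \<forall>z\<in>carr A. amul A (amul A x y) z = amul A x (amul A y z)) \<and>
     (\<forall>x\<in>carr A. \<forall>y\<in>carr A. \<forall>z\<in>carr A. amul A (vadd A x y) z = vadd A (amul A x z) (amul A y z)) \<and>
     (\<forall>x\<in>carr A. \<forall>y\<in>carr A. \<forall>z\<in>carr A. amul A x (vadd A y z) = vadd A (amul A x y) (amul A x z)) \<and>
     (\<forall>c. \<forall>x\<in>carr A. \<forall>y\<in>carr A. amul A (smul A c x) y = smul A c (amul A x y)) \<and>
     (\<forall>c. \<forall>x\<in>carr A. \<forall>y\<in>carr A. amul A x (smul A c y) = smul A c (amul A x y)) \<and>
     (\<forall>x\<in>carr A. amul A (aone A) x = x \<and> amul A x (aone A) = x) \<and>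
     continuous_map (prod_topology (topo A) (topo A)) (topo A) (\<lambda>(x,y). amul A x y)"

definition commutator :: "('k::field,'v,'z) talg_scheme \<Rightarrow> 'v \<Rightarrow> 'v \<Rightarrow> 'v" where
  "commutator A x y = vsub A (amul A x y) (amul A y x)"

definition alg_hom :: "('k::real_normed_field,'v,'z) talg_scheme \<Rightarrow> ('k,'w,'y) talg_scheme \<Rightarrow> ('v \<Rightarrow> 'w) \<Rightarrow> bool" where
  "alg_hom A B f \<longleftrightarrow> linear_on A B f \<and> f (aone A) = aone B \<and>
     (\<forall>x\<in>carr A. \<forall>y\<in>carr A. f (amul A x y) = amul B (f x) (f y)) \<and>
     continuous_map (topo A) (topo B) f"

definition scalar_alg :: "('k::real_normed_field,'k) talg" where
  "scalar_alg = \<lparr> carr = UNIV, vadd = (+), vzero = 0, smul = (*), topo = euclidean,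
                  amul = (*), aone = 1 \<rparr>"

definition top_lie_algebra :: "('k::real_normed_field,'v,'z) tlie_scheme \<Rightarrow> bool" where
  "top_lie_algebra L \<longleftrightarrow> tvs L \<and>
     (\<forall>x\<in>carr L. \<forall>y\<in>carr L. brk L x y \<in> carr L) \<and>
     (\<forall>x\<in>carr L. \<forall>y\<in>carr L. \<forall>z\<in>carr L. brk L (vadd L x y) z = vadd L (brk L x z) (brk L y z)) \<and>
     (\<forall>x\<in>carr L. \<forall>y\<in>carr L. \<forall>z\<in>carr L. brk L x (vadd L y z) = vadd L (brk L x y) (brk L x z)) \<and>
     (\<forall>c. \<forall>x\<in>carr L. \<forall>y\<in>carr L. brk L (smul L c x) y = smul L c (brk L x y)) \<and>
     (\<forall>c. \<forall>x\<in>carr L. \<forall>y\<in>carr L. brk L x (smul L c y) = smul L c (brk L x y)) \<and>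
     (\<forall>x\<in>carr L. brk L x x = vzero L) \<and>
     (\<forall>x\<in>carr L. \<forall>y\<in>carr L. \<forall>z\<in>carr L.
        vadd L (brk L x (brk L y z)) (vadd L (brk L y (brk L z x)) (brk L z (brk L x y))) = vzero L) \<and>
     continuous_map (prod_topology (topo L) (topo L)) (topo L) (\<lambda>(x,y). brk L x y)"

primrec lcomb :: "('k::field,'v,'z) tvs_scheme \<Rightarrow> ('k \<times> 'v) list \<Rightarrow> 'v" where
  "lcomb V [] = vzero V"
| "lcomb V (p # ps) = vadd V (smul V (fst p) (snd p)) (lcomb V ps)"

definition lie_ideal :: "('k::field,'v,'z) tlie_scheme \<Rightarrow> 'v set \<Rightarrow> bool" where
  "lie_ideal L I \<longleftrightarrow> I \<subseteq> carr L \<and> vzero L \<in> I \<and>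
     (\<forall>x\<in>I. \<forall>y\<in>I. vadd L x y \<in> I) \<and> (\<forall>c. \<forall>x\<in>I. smul L c x \<in> I) \<and>
     (\<forall>x\<in>carr L. \<forall>i\<in>I. brk L x i \<in> I)"

text \<open>dim (L/I) is finite: L = span(vs) + I for a finite list vs.\<close>
definition finite_codim :: "('k::field,'v,'z) tvs_scheme \<Rightarrow> 'v set \<Rightarrow> bool" where
  "finite_codim V I \<longleftrightarrow> (\<exists>vs. set vs \<subseteq> carr V \<and>
     (\<forall>x\<in>carr V. \<exists>cs. length cs = length vs \<and> vsub V x (lcomb V (zip cs vs)) \<in> I))"

definition cofinite_ideals :: "('k::real_normed_field,'v,'z) tlie_scheme \<Rightarrow> 'v set set" where
  "cofinite_ideals L = {I. lie_ideal L I \<and> closedin (topo L) I \<and> finite_codim L I}"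

definition coset :: "('k,'v,'z) tvs_scheme \<Rightarrow> 'v \<Rightarrow> 'v set \<Rightarrow> 'v set" where
  "coset V x I = {vadd V x i | i. i \<in> I}"

text \<open>Elements of the projective limit lim_I L/I (families of cosets, compatible
  under the quotient maps L/J -> L/I for J \<subseteq> I).\<close>
definition proj_limit :: "('k::real_normed_field,'v,'z) tlie_scheme \<Rightarrow> ('v set \<Rightarrow> 'v set) set" where
  "proj_limit L = {F. (\<forall>I\<in>cofinite_ideals L. \<exists>y\<in>carr L. F I = coset L y I) \<and>
      (\<forall>I\<in>cofinite_ideals L. \<forall>J\<in>cofinite_ideals L. J \<subseteq> I \<longrightarrow> F J \<subseteq> F I)}"

text \<open>Profinite-dimensional: the canonical map L -> lim L/I is a bijection (hence an
  isomorphism of Lie algebras, the limit structure being pointwise) and a homeomorphism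
  for the limit topology, i.e. the initial topology of the quotient maps L -> L/I
  (L/I with the quotient topology); its opens pulled back to L are the I-saturated opens.\<close>
definition profinite_dim_lie :: "('k::real_normed_field,'v,'z) tlie_scheme \<Rightarrow> bool" where
  "profinite_dim_lie L \<longleftrightarrow> top_lie_algebra L \<and>
     (\<forall>F\<in>proj_limit L. \<exists>!x. x \<in> carr L \<and> (\<forall>I\<in>cofinite_ideals L. F I = coset L x I)) \<and>
     topo L = topology_generated_by
        {S. openin (topo L) S \<and> (\<exists>I\<in>cofinite_ideals L. \<forall>x\<in>S. \<forall>i\<in>I. vadd L x i \<in> S)}"

definition lie_morphism_into :: "('k::real_normed_field,'v,'z) tlie_scheme \<Rightarrow> ('k,'w,'y) talg_scheme \<Rightarrow> ('v \<Rightarrow> 'w) \<Rightarrow> bool" where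
  "lie_morphism_into L A f \<longleftrightarrow> linear_on L A f \<and>
     (\<forall>x\<in>carr L. \<forall>y\<in>carr L. f (brk L x y) = commutator A (f x) (f y)) \<and>
     continuous_map (topo L) (topo A) f"

text \<open>U with lambda is the weakly complete enveloping algebra of L. The universal
  property is quantified over weakly complete unital algebras carried by the type of U.\<close>
definition enveloping_algebra :: "('k::real_normed_field,'v,'z) tlie_scheme \<Rightarrow> ('k,'u) talg \<Rightarrow> ('v \<Rightarrow> 'u) \<Rightarrow> bool" where
  "enveloping_algebra L U lam \<longleftrightarrow> wc_algebra U \<and> lie_morphism_into L U lam \<and>
     inj_on lam (carr L) \<and> closedin (topo U) (lam ` carr L) \<and>
     homeomorphic_map (topo L) (subtopology (topo U) (lam ` carr L)) lam \<and>
     (\<forall>(A::('k,'u) talg) f. wc_algebra A \<and> lie_morphism_into L A f \<longrightarrow>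
        (\<exists>\<phi>. alg_hom U A \<phi> \<and> (\<forall>x\<in>carr L. \<phi> (lam x) = f x)) \<and>
        (\<forall>\<phi> \<psi>. alg_hom U A \<phi> \<and> (\<forall>x\<in>carr L. \<phi> (lam x) = f x) \<and>
                 alg_hom U A \<psi> \<and> (\<forall>x\<in>carr L. \<psi> (lam x) = f x) \<longrightarrow>
                 (\<forall>u\<in>carr U. \<phi> u = \<psi> u)))"

definition cont_bilinear :: "('k::real_normed_field,'u,'z) tvs_scheme \<Rightarrow> ('k,'w,'y) tvs_scheme \<Rightarrow> ('u \<Rightarrow> 'u \<Rightarrow> 'w) \<Rightarrow> bool" where
  "cont_bilinear U W b \<longleftrightarrow> (\<forall>x\<in>carr U. \<forall>y\<in>carr U. b x y \<in> carr W) \<and>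
     (\<forall>x\<in>carr U. linear_on U W (b x)) \<and> (\<forall>y\<in>carr U. linear_on U W (\<lambda>x. b x y)) \<and>
     continuous_map (prod_topology (topo U) (topo U)) (topo W) (\<lambda>(x,y). b x y)"

text \<open>T with tens is the tensor product U \<otimes>_W U in the category of weakly complete
  spaces (universal for continuous bilinear maps into weakly complete spaces carried by
  the type of T), equipped with its algebra structure (a\<otimes>b)(c\<otimes>d) = ac\<otimes>bd, 1 = 1\<otimes>1.\<close>
definition wc_tensor_algebra :: "('k::real_normed_field,'u) talg \<Rightarrow> ('k,'t) talg \<Rightarrow> ('u \<Rightarrow> 'u \<Rightarrow> 't) \<Rightarrow> bool" where
  "wc_tensor_algebra U T tens \<longleftrightarrow> wc_algebra T \<and> cont_bilinear U T tens \<and>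
     (\<forall>(W::('k,'t) tvs) b. weakly_complete W \<and> cont_bilinear U W b \<longrightarrow>
        (\<exists>\<phi>. linear_on T W \<phi> \<and> continuous_map (topo T) (topo W) \<phi> \<and>
              (\<forall>x\<in>carr U. \<forall>y\<in>carr U. \<phi> (tens x y) = b x y)) \<and>
        (\<forall>\<phi> \<psi>. linear_on T W \<phi> \<and> continuous_map (topo T) (topo W) \<phi> \<and>
                 (\<forall>x\<in>carr U. \<forall>y\<in>carr U. \<phi> (tens x y) = b x y) \<and>
                 linear_on T W \<psi> \<and> continuous_map (topo T) (topo W) \<psi> \<and>
                 (\<forall>x\<in>carr U. \<forall>y\<in>carr U. \<psi> (tens x y) = b x y) \<longrightarrow>
                 (\<forall>t\<in>carr T. \<phi> t = \<psi> t))) \<and>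
     aone T = tens (aone U) (aone U) \<and>
     (\<forall>a\<in>carr U. \<forall>b\<in>carr U. \<forall>c\<in>carr U. \<forall>d\<in>carr U.
        amul T (tens a b) (tens c d) = tens (amul U a c) (amul U b d))"

end

theory Submission
  imports Defs
begin


lemma cont_mult_k:
  fixes f g :: "'a \<Rightarrow> 'k::real_normed_field"
  assumes "continuous_map X euclidean f" "continuous_map X euclidean g"
  shows "continuous_map X euclidean (\<lambda>x. f x * g x)"
proof -
  have p: "continuous_map X (prod_topology euclidean euclidean) (\<lambda>x. (f x, g x))"
    by (rule continuous_map_pairedI[OF assms])
  have m: "continuous_map euclidean euclidean (\<lambda>p::'k\<times>'k. fst p * snd p)"
    by (simp add: continuous_on_mult continuous_on_fst continuous_on_snd continuous_on_id)
  show ?thesis using continuous_map_compose[OF p, of euclidean "\<lambda>p. fst p * snd p"] m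
    by (simp add: o_def)
qed

lemma vs_smul0:
  assumes "vector_space_on V" "x \<in> carr V"
  shows "smul V 0 x = vzero V"
proof -
  let ?y = "smul V 0 x"
  have y: "?y \<in> carr V" using assms unfolding vector_space_on_def by blast
  have yy: "vadd V ?y ?y = ?y"
    using assms unfolding vector_space_on_def by (metis add_0)
  have m: "smul V (-1) ?y \<in> carr V" using assms y unfolding vector_space_on_def by blast
  have "vadd V (vadd V ?y ?y) (smul V (-1) ?y) = vadd V ?y (vadd V ?y (smul V (-1) ?y))"
    using assms y m unfolding vector_space_on_def by blast
  also have "\<dots> = ?y" using assms y unfolding vector_space_on_def by metis
  finally show ?thesis using yy assms y unfolding vector_space_on_def by metis
qed

definition delta :: "'j set \<Rightarrow> 'j \<Rightarrow> 'j \<Rightarrow> 'k::real_normed_field" where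
  "delta J g = (\<lambda>j\<in>J. if j = g then 1 else 0)"

locale wcs =
  fixes V :: "('k::{real_normed_field,banach},'v,'z) tvs_scheme" and J :: "'j set" and f :: "'v \<Rightarrow> 'j \<Rightarrow> 'k"
  assumes tv: "tvs V"
    and lin: "linear_on V (power_space J) f"
    and bij: "bij_betw f (carr V) (carr (power_space J))"
    and hom: "homeomorphic_map (topo V) (topo (power_space J)) f"
begin

lemma vs: "vector_space_on V" using tv unfolding tvs_def by blast
lemma top: "topspace (topo V) = carr V" using tv unfolding tvs_def by blast

lemma zero_in: "vzero V \<in> carr V" using vs unfolding vector_space_on_def by blast
lemma add_in: "a \<in> carr V \<Longrightarrow> b \<in> carr V \<Longrightarrow> vadd V a b \<in> carr V"
  using vs by (simp add: vector_space_on_def)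
lemma smul_in: "a \<in> carr V \<Longrightarrow> smul V c a \<in> carr V"
  using vs by (simp add: vector_space_on_def)

lemma f_in: "a \<in> carr V \<Longrightarrow> f a \<in> PiE J (\<lambda>_. UNIV)"
  using lin unfolding linear_on_def power_space_def by auto

lemma f_add: "a \<in> carr V \<Longrightarrow> b \<in> carr V \<Longrightarrow> f (vadd V a b) = (\<lambda>j\<in>J. f a j + f b j)"
  using lin unfolding linear_on_def power_space_def by auto

lemma f_smul: "a \<in> carr V \<Longrightarrow> f (smul V c a) = (\<lambda>j\<in>J. c * f a j)"
  using lin unfolding linear_on_def power_space_def by auto

lemma f_add_j: "a \<in> carr V \<Longrightarrow> b \<in> carr V \<Longrightarrow> j \<in> J \<Longrightarrow> f (vadd V a b) j = f a j + f b j"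
  by (simp add: f_add)

lemma f_smul_j: "a \<in> carr V \<Longrightarrow> j \<in> J \<Longrightarrow> f (smul V c a) j = c * f a j"
  by (simp add: f_smul)

lemma f_zero: "f (vzero V) = (\<lambda>j\<in>J. 0)"
proof -
  have "f (vzero V) = f (smul V 0 (vzero V))" using vs_smul0[OF vs zero_in] by simp
  also have "\<dots> = (\<lambda>j\<in>J. 0)" using f_smul[OF zero_in] by simp
  finally show ?thesis .
qed

lemma f_inj: "a \<in> carr V \<Longrightarrow> b \<in> carr V \<Longrightarrow> f a = f b \<Longrightarrow> a = b"
  using bij unfolding bij_betw_def inj_on_def by blast

lemma f_ext: "a \<in> carr V \<Longrightarrow> b \<in> carr V \<Longrightarrow> (\<And>j. j \<in> J \<Longrightarrow> f a j = f b j) \<Longrightarrow> a = b"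
  apply (rule f_inj, assumption+)
  using f_in by (meson PiE_ext)

definition finv :: "('j \<Rightarrow> 'k) \<Rightarrow> 'v" where "finv p = inv_into (carr V) f p"

lemma finv: assumes "p \<in> PiE J (\<lambda>_. UNIV)" shows "finv p \<in> carr V" "f (finv p) = p"
proof -
  have "p \<in> f ` carr V" using bij assms unfolding bij_betw_def power_space_def by simp
  then show "finv p \<in> carr V" "f (finv p) = p" unfolding finv_def
    by (auto simp: inv_into_into f_inv_into_f)
qed

lemma finv_r: "finv (restrict p J) \<in> carr V" "f (finv (restrict p J)) = restrict p J"
  by (rule finv, simp)+

definition e :: "'j \<Rightarrow> 'v" where "e g = finv (delta J g)"

lemma e_in: "e g \<in> carr V" and f_e: "f (e g) = delta J g"
  unfolding e_def delta_def by (rule finv_r)+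

lemma vanish:
  fixes \<beta> :: "'v \<Rightarrow> 'w \<Rightarrow> 'k" and Wt :: "'w topology"
  assumes cont: "continuous_map (prod_topology (topo V) Wt) euclidean (\<lambda>(a,z). \<beta> a z)"
    and hm: "\<And>c a z. a \<in> carr V \<Longrightarrow> z \<in> topspace Wt \<Longrightarrow> \<beta> (smul V c a) z = c * \<beta> a z"
    and scc: "\<And>z. z \<in> topspace Wt \<Longrightarrow> continuous_map euclidean Wt (\<lambda>s. sc s z)"
    and sc0: "\<And>z. z \<in> topspace Wt \<Longrightarrow> sc 0 z = w0"
    and scb: "\<And>s a z. a \<in> carr V \<Longrightarrow> z \<in> topspace Wt \<Longrightarrow> \<beta> a (sc s z) = s * \<beta> a z"
    and w0: "w0 \<in> topspace Wt"
  shows "\<exists>F. finite F \<and> F \<subseteq> J \<and> (\<forall>a\<in>carr V. \<forall>z\<in>topspace Wt. (\<forall>g\<in>F. f a g = 0) \<longrightarrow> \<beta> a z = 0)"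
proof -
  define S where "S = {x \<in> topspace (prod_topology (topo V) Wt). (\<lambda>(a,z). \<beta> a z) x \<in> ball 0 1}"
  have So: "openin (prod_topology (topo V) Wt) S"
    unfolding S_def by (rule openin_continuous_map_preimage[OF cont]) simp
  have b0: "\<beta> (vzero V) w0 = 0"
    using hm[OF zero_in w0, of 0] unfolding vs_smul0[OF vs zero_in] by simp
  have mem: "(vzero V, w0) \<in> S" unfolding S_def using b0 w0 zero_in top by simp
  have ex: "\<exists>U1 V1. openin (topo V) U1 \<and> openin Wt V1 \<and> vzero V \<in> U1 \<and> w0 \<in> V1 \<and> U1 \<times> V1 \<subseteq> S"
    using openin_prod_topology_alt[THEN iffD1, OF So, rule_format, OF mem] .
  then obtain U1 V1 where U1: "openin (topo V) U1" and V1: "openin Wt V1" and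
      inU: "vzero V \<in> U1" "w0 \<in> V1" and sub: "U1 \<times> V1 \<subseteq> S"
    by blast
  have U1c: "U1 \<subseteq> carr V" using openin_subset[OF U1] top by simp
  have fo: "openin (topo (power_space J)) (f ` U1)"
    using homeomorphic_map_openness[OF hom openin_subset[OF U1]] U1 by simp
  have "f (vzero V) \<in> f ` U1" using inU by simp
  moreover have fo': "openin (product_topology (\<lambda>_. euclidean) J) (f ` U1)"
    using fo by (simp add: power_space_def)
  ultimately obtain X where X: "f (vzero V) \<in> PiE J X" "\<forall>i. openin euclidean (X i)"
      "finite {i. X i \<noteq> topspace euclidean}" "PiE J X \<subseteq> f ` U1"
    using product_topology_open_contains_basis[OF fo'] by metis
  define F where "F = {i. X i \<noteq> UNIV} \<inter> J"
  have Ff: "finite F" using X(3) unfolding F_def by simp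
  have X0: "\<And>j. j \<in> J \<Longrightarrow> (0::'k) \<in> X j" using X(1) unfolding f_zero PiE_iff by simp
  have main: "\<beta> a z = 0" if a: "a \<in> carr V" and z: "z \<in> topspace Wt" and af: "\<forall>g\<in>F. f a g = 0" for a z
  proof (rule ccontr)
    assume nz: "\<beta> a z \<noteq> 0"
    have "openin euclidean {s \<in> topspace euclidean. sc s z \<in> V1}"
      by (rule openin_continuous_map_preimage[OF scc[OF z] V1])
    then have oo: "open {s. sc s z \<in> V1}" by simp
    have "(0::'k) \<in> {s. sc s z \<in> V1}" using sc0[OF z] inU(2) by simp
    then obtain \<epsilon> where \<epsilon>: "\<epsilon> > 0" "ball 0 \<epsilon> \<subseteq> {s. sc s z \<in> V1}"
      using oo open_contains_ball by blast
    define s :: 'k where "s = of_real (\<epsilon>/2)"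
    have "s \<in> ball 0 \<epsilon>" unfolding s_def using \<epsilon>(1) by simp
    then have sV: "sc s z \<in> V1" using \<epsilon>(2) by blast
    have s0: "s \<noteq> 0" using \<epsilon>(1) unfolding s_def by simp
    define r where "r = inverse (s * \<beta> a z)"
    have "f (smul V r a) \<in> PiE J X"
    proof -
      have "\<And>j. j \<in> J \<Longrightarrow> r * f a j \<in> X j"
      proof -
        fix j assume j: "j \<in> J"
        show "r * f a j \<in> X j"
        proof (cases "j \<in> F")
          case True then show ?thesis using af X0 j by simp
        next
          case False then show ?thesis using j unfolding F_def by auto
        qed
      qed
      then show ?thesis unfolding f_smul[OF a] restrict_PiE_iff by blast
    qed
    then obtain u where u: "u \<in> U1" "f u = f (smul V r a)" using X(4) by (metis imageE subsetD)
    have "u \<in> carr V" using U1c u(1) by (rule subsetD)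
    then have "u = smul V r a" using f_inj[OF _ smul_in[OF a] u(2)] by metis
    then have "(smul V r a, sc s z) \<in> S" using subsetD[OF sub, of "(u, sc s z)"] u(1) sV by simp
    then have "norm (\<beta> (smul V r a) (sc s z)) < 1" unfolding S_def by simp
    moreover have "\<beta> (smul V r a) (sc s z) = s * (r * \<beta> a z)"
      using scb[OF smul_in[OF a] z] hm[OF a z] by simp
    then have "\<beta> (smul V r a) (sc s z) = 1"
      using s0 nz unfolding r_def by (simp add: field_simps)
    ultimately show False by simp
  qed
  show ?thesis using Ff main F_def by blast
qed

lemma expand:
  fixes \<beta> :: "'v \<Rightarrow> 'w \<Rightarrow> 'k" and Wt :: "'w topology"
  assumes cont: "continuous_map (prod_topology (topo V) Wt) euclidean (\<lambda>(a,z). \<beta> a z)"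
    and ad: "\<And>a b z. a \<in> carr V \<Longrightarrow> b \<in> carr V \<Longrightarrow> z \<in> topspace Wt \<Longrightarrow> \<beta> (vadd V a b) z = \<beta> a z + \<beta> b z"
    and hm: "\<And>c a z. a \<in> carr V \<Longrightarrow> z \<in> topspace Wt \<Longrightarrow> \<beta> (smul V c a) z = c * \<beta> a z"
    and scc: "\<And>z. z \<in> topspace Wt \<Longrightarrow> continuous_map euclidean Wt (\<lambda>s. sc s z)"
    and sc0: "\<And>z. z \<in> topspace Wt \<Longrightarrow> sc 0 z = w0"
    and scb: "\<And>s a z. a \<in> carr V \<Longrightarrow> z \<in> topspace Wt \<Longrightarrow> \<beta> a (sc s z) = s * \<beta> a z"
    and w0: "w0 \<in> topspace Wt"
  shows "\<exists>F. finite F \<and> F \<subseteq> J \<and> (\<forall>a\<in>carr V. \<forall>z\<in>topspace Wt. \<beta> a z = (\<Sum>g\<in>F. f a g * \<beta> (e g) z))"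
proof -
  obtain F where F: "finite F" "F \<subseteq> J" and van: "\<And>a z. a\<in>carr V \<Longrightarrow> z\<in>topspace Wt \<Longrightarrow> (\<forall>g\<in>F. f a g = 0) \<Longrightarrow> \<beta> a z = 0"
    using vanish[OF cont hm scc sc0 scb w0] by metis
  have bz: "\<beta> (vzero V) z = 0" if z: "z \<in> topspace Wt" for z
    using hm[OF zero_in z, of 0] unfolding vs_smul0[OF vs zero_in] by simp
  define pr where "pr G a = finv (\<lambda>j\<in>J. if j \<in> G then f a j else 0)" for G a
  have pr_in: "pr G a \<in> carr V" for G a unfolding pr_def by (rule finv_r)
  have ind: "\<beta> (pr G a) z = (\<Sum>g\<in>G. f a g * \<beta> (e g) z)"
    if G: "finite G" "G \<subseteq> J" and a: "a \<in> carr V" and z: "z \<in> topspace Wt" for G a z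
    using G
  proof (induction G rule: finite_induct)
    case empty
    have "pr {} a = vzero V"
      by (rule f_inj[OF pr_in zero_in]) (simp add: pr_def finv_r f_zero)
    then show ?case using bz[OF z] by simp
  next
    case (insert h G)
    have hJ: "h \<in> J" using insert by simp
    have eq: "pr (insert h G) a = vadd V (smul V (f a h) (e h)) (pr G a)"
    proof (rule f_ext[OF pr_in add_in[OF smul_in[OF e_in] pr_in]])
      fix j assume j: "j \<in> J"
      show "f (pr (insert h G) a) j = f (vadd V (smul V (f a h) (e h)) (pr G a)) j"
        using j insert(2) unfolding f_add_j[OF smul_in[OF e_in] pr_in j] f_smul_j[OF e_in j] f_e
        by (simp add: pr_def finv_r delta_def)
    qed
    show ?case unfolding eq using insert
      by (simp add: ad[OF smul_in[OF e_in] pr_in z] hm[OF e_in z])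
  qed
  define rest where "rest a = finv (\<lambda>j\<in>J. if j \<in> F then 0 else f a j)" for a
  have rest_in: "rest a \<in> carr V" for a unfolding rest_def by (rule finv_r)
  have "\<beta> a z = (\<Sum>g\<in>F. f a g * \<beta> (e g) z)" if a: "a \<in> carr V" and z: "z \<in> topspace Wt" for a z
  proof -
    have "a = vadd V (pr F a) (rest a)"
    proof (rule f_ext[OF a add_in[OF pr_in rest_in]])
      fix j assume j: "j \<in> J"
      show "f a j = f (vadd V (pr F a) (rest a)) j"
        unfolding f_add_j[OF pr_in rest_in j] using j by (simp add: pr_def rest_def finv_r)
    qed
    then have "\<beta> a z = \<beta> (pr F a) z + \<beta> (rest a) z" using ad[OF pr_in rest_in z] by metis
    moreover have "\<beta> (rest a) z = 0"
      by (rule van[OF rest_in z]) (use F(2) in \<open>auto simp: rest_def finv_r\<close>)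
    ultimately show ?thesis using ind[OF F a z] by simp
  qed
  then show ?thesis using F by blast
qed

lemma expand_fun:
  fixes \<phi> :: "'v \<Rightarrow> 'k"
  assumes cont: "continuous_map (topo V) euclidean \<phi>"
    and ad: "\<And>a b. a \<in> carr V \<Longrightarrow> b \<in> carr V \<Longrightarrow> \<phi> (vadd V a b) = \<phi> a + \<phi> b"
    and hm: "\<And>c a. a \<in> carr V \<Longrightarrow> \<phi> (smul V c a) = c * \<phi> a"
  shows "\<exists>F. finite F \<and> F \<subseteq> J \<and> (\<forall>a\<in>carr V. \<phi> a = (\<Sum>g\<in>F. f a g * \<phi> (e g)))"
proof -
  have c2: "continuous_map (prod_topology (topo V) euclidean) euclidean (\<lambda>(a,z). z * \<phi> a)"
  proof -
    have "continuous_map (prod_topology (topo V) euclidean) euclidean (\<lambda>x. snd x * \<phi> (fst x))"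
      by (rule cont_mult_k[OF continuous_map_snd continuous_map_compose[OF continuous_map_fst cont, unfolded o_def]])
    then show ?thesis by (simp add: split_def)
  qed
  have "\<exists>F. finite F \<and> F \<subseteq> J \<and> (\<forall>a\<in>carr V. \<forall>z\<in>topspace euclidean. z * \<phi> a = (\<Sum>g\<in>F. f a g * (z * \<phi> (e g))))"
  proof (rule expand[OF c2, of "\<lambda>s z. s * z" 0])
    show "\<And>a b z. a \<in> carr V \<Longrightarrow> b \<in> carr V \<Longrightarrow> z \<in> topspace euclidean \<Longrightarrow>
          z * \<phi> (vadd V a b) = z * \<phi> a + z * \<phi> b" using ad by (simp add: distrib_left)
    show "\<And>c a z. a \<in> carr V \<Longrightarrow> z \<in> topspace euclidean \<Longrightarrow> z * \<phi> (smul V c a) = c * (z * \<phi> a)"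
      using hm by (simp add: algebra_simps)
    show "\<And>z. z \<in> topspace euclidean \<Longrightarrow> continuous_map euclidean euclidean (\<lambda>s::'k. s * z)"
      by (simp add: continuous_on_mult_right continuous_on_id)
    show "\<And>z. z \<in> topspace euclidean \<Longrightarrow> 0 * z = (0::'k)" by simp
    show "\<And>s a z. a \<in> carr V \<Longrightarrow> z \<in> topspace euclidean \<Longrightarrow> s * z * \<phi> a = s * (z * \<phi> a)"
      by (simp add: algebra_simps)
    show "(0::'k) \<in> topspace euclidean" by simp
  qed
  then obtain F where F: "finite F" "F \<subseteq> J" and ex0: "\<forall>a\<in>carr V. \<forall>z\<in>topspace euclidean. z * \<phi> a = (\<Sum>g\<in>F. f a g * (z * \<phi> (e g)))"
    by blast
  have ex: "\<And>a. a\<in>carr V \<Longrightarrow> 1 * \<phi> a = (\<Sum>g\<in>F. f a g * (1 * \<phi> (e g)))"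
  proof -
    fix a assume "a \<in> carr V"
    moreover have "(1::'k) \<in> topspace euclidean" by simp
    ultimately show "1 * \<phi> a = (\<Sum>g\<in>F. f a g * (1 * \<phi> (e g)))" using ex0 by blast
  qed
  show ?thesis using F ex by (intro exI[of _ F]) simp
qed

lemma fun_series:
  fixes \<phi> :: "'v \<Rightarrow> 'k"
  assumes cont: "continuous_map (topo V) euclidean \<phi>"
    and ad: "\<And>a b. a \<in> carr V \<Longrightarrow> b \<in> carr V \<Longrightarrow> \<phi> (vadd V a b) = \<phi> a + \<phi> b"
    and hm: "\<And>c a. a \<in> carr V \<Longrightarrow> \<phi> (smul V c a) = c * \<phi> a"
    and s: "\<And>n. s n \<in> carr V"
    and sm: "\<And>j. j \<in> J \<Longrightarrow> summable (\<lambda>n. norm (f (s n) j * w n))"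
  shows "summable (\<lambda>n. norm (\<phi> (s n) * w n))"
    and "\<phi> (finv (\<lambda>j\<in>J. \<Sum>n. f (s n) j * w n)) = (\<Sum>n. \<phi> (s n) * w n)"
proof -
  obtain F where F: "finite F" "F \<subseteq> J" and ex: "\<And>a. a\<in>carr V \<Longrightarrow> \<phi> a = (\<Sum>g\<in>F. f a g * \<phi> (e g))"
    using expand_fun[OF cont ad hm] by metis
  have sm': "summable (\<lambda>n. f (s n) j * w n)" if "j \<in> J" for j
    using summable_norm_cancel[of "\<lambda>n. f (s n) j * w n"] sm[OF that] by simp
  have eqn: "\<phi> (s n) * w n = (\<Sum>g\<in>F. f (s n) g * w n * \<phi> (e g))" for n
    by (subst ex[OF s]) (simp add: sum_distrib_left sum_distrib_right algebra_simps)
  have "summable (\<lambda>n. \<Sum>g\<in>F. norm (f (s n) g * w n) * norm (\<phi> (e g)))"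
  proof (rule summable_sum)
    fix g assume "g \<in> F"
    then have "g \<in> J" using F by blast
    then show "summable (\<lambda>n. norm (f (s n) g * w n) * norm (\<phi> (e g)))"
      by (rule summable_mult2[OF sm])
  qed
  then show "summable (\<lambda>n. norm (\<phi> (s n) * w n))"
  proof (rule summable_comparison_test[rotated], intro exI allI impI)
    fix n
    have "norm (norm (\<phi> (s n) * w n)) = norm (\<Sum>g\<in>F. f (s n) g * w n * \<phi> (e g))" using eqn by simp
    also have "\<dots> \<le> (\<Sum>g\<in>F. norm (f (s n) g * w n * \<phi> (e g)))" by (rule norm_sum)
    also have "\<dots> = (\<Sum>g\<in>F. norm (f (s n) g * w n) * norm (\<phi> (e g)))" by (simp add: norm_mult)
    finally show "norm (norm (\<phi> (s n) * w n)) \<le> (\<Sum>g\<in>F. norm (f (s n) g * w n) * norm (\<phi> (e g)))" .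
  qed
  let ?p = "\<lambda>j\<in>J. \<Sum>n. f (s n) j * w n"
  have "\<phi> (finv ?p) = (\<Sum>g\<in>F. f (finv ?p) g * \<phi> (e g))" by (rule ex[OF finv_r(1)])
  also have "\<dots> = (\<Sum>g\<in>F. (\<Sum>n. f (s n) g * w n) * \<phi> (e g))"
    using F by (intro sum.cong refl) (auto simp: finv_r)
  also have "\<dots> = (\<Sum>g\<in>F. \<Sum>n. f (s n) g * w n * \<phi> (e g))"
  proof (rule sum.cong[OF refl])
    fix g assume "g \<in> F"
    then have "g \<in> J" using F by blast
    then show "(\<Sum>n. f (s n) g * w n) * \<phi> (e g) = (\<Sum>n. f (s n) g * w n * \<phi> (e g))"
      by (rule suminf_mult2[OF sm'])
  qed
  also have "\<dots> = (\<Sum>n. \<Sum>g\<in>F. f (s n) g * w n * \<phi> (e g))"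
  proof (rule suminf_sum[symmetric])
    fix g assume "g \<in> F"
    then have "g \<in> J" using F by blast
    then show "summable (\<lambda>n. f (s n) g * w n * \<phi> (e g))"
      by (rule summable_mult2[OF sm'])
  qed
  also have "\<dots> = (\<Sum>n. \<phi> (s n) * w n)" using eqn by simp
  finally show "\<phi> (finv ?p) = (\<Sum>n. \<phi> (s n) * w n)" .
qed

end



primrec pw :: "('k,'v,'z) talg_scheme \<Rightarrow> 'v \<Rightarrow> nat \<Rightarrow> 'v" where
  "pw A x 0 = aone A"
| "pw A x (Suc n) = amul A x (pw A x n)"

context wcs begin

lemma smul_cont: "z \<in> carr V \<Longrightarrow> continuous_map euclidean (topo V) (\<lambda>s. smul V s z)"
proof -
  assume z: "z \<in> carr V"
  have c: "continuous_map (prod_topology euclidean (topo V)) (topo V) (\<lambda>(c,x). smul V c x)"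
    using tv unfolding tvs_def by blast
  have p: "continuous_map euclidean (prod_topology euclidean (topo V)) (\<lambda>s. (s, z))"
  proof -
    have "continuous_map euclidean (topo V) (\<lambda>s. z)" using z top by (simp add: continuous_map_const)
    from continuous_map_pairedI[OF continuous_map_id this] show ?thesis by simp
  qed
  show ?thesis using continuous_map_compose[OF p c] by (simp add: o_def)
qed

lemma f_cont_j: "j \<in> J \<Longrightarrow> continuous_map (topo V) euclidean (\<lambda>a. f a j)"
proof -
  assume j: "j \<in> J"
  have "continuous_map (topo V) (product_topology (\<lambda>_. euclidean) J) f"
    using homeomorphic_imp_continuous_map[OF hom] by (simp add: power_space_def)
  from continuous_map_compose[OF this continuous_map_product_projection[OF j]]
  show ?thesis by (simp add: o_def)
qed

end

locale wca = wcs A J f for A :: "('k::{real_normed_field,banach},'v,'z) talg_scheme" and J :: "'j set" and f +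
  assumes wc: "wc_algebra A"
begin

lemma one_in: "aone A \<in> carr A" using wc unfolding wc_algebra_def by blast
lemma mul_in: "x \<in> carr A \<Longrightarrow> y \<in> carr A \<Longrightarrow> amul A x y \<in> carr A"
  using wc by (simp add: wc_algebra_def)
lemma assoc: "x \<in> carr A \<Longrightarrow> y \<in> carr A \<Longrightarrow> z \<in> carr A \<Longrightarrow> amul A (amul A x y) z = amul A x (amul A y z)"
  using wc by (simp add: wc_algebra_def)
lemma ldistr: "x \<in> carr A \<Longrightarrow> y \<in> carr A \<Longrightarrow> z \<in> carr A \<Longrightarrow> amul A (vadd A x y) z = vadd A (amul A x z) (amul A y z)"
  using wc by (simp add: wc_algebra_def)
lemma rdistr: "x \<in> carr A \<Longrightarrow> y \<in> carr A \<Longrightarrow> z \<in> carr A \<Longrightarrow> amul A x (vadd A y z) = vadd A (amul A x y) (amul A x z)"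
  using wc by (simp add: wc_algebra_def)
lemma smul_l: "x \<in> carr A \<Longrightarrow> y \<in> carr A \<Longrightarrow> amul A (smul A c x) y = smul A c (amul A x y)"
  using wc by (simp add: wc_algebra_def)
lemma smul_r: "x \<in> carr A \<Longrightarrow> y \<in> carr A \<Longrightarrow> amul A x (smul A c y) = smul A c (amul A x y)"
  using wc by (simp add: wc_algebra_def)
lemma one_l: "x \<in> carr A \<Longrightarrow> amul A (aone A) x = x"
  using wc by (simp add: wc_algebra_def)
lemma one_r: "x \<in> carr A \<Longrightarrow> amul A x (aone A) = x"
  using wc by (simp add: wc_algebra_def)
lemma mul_cont: "continuous_map (prod_topology (topo A) (topo A)) (topo A) (\<lambda>(x,y). amul A x y)"
  using wc by (simp add: wc_algebra_def)

lemma pw_in: "x \<in> carr A \<Longrightarrow> pw A x n \<in> carr A"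
  by (induction n) (simp_all add: one_in mul_in)

lemma mult_expand:
  assumes j: "j \<in> J"
  shows "\<exists>F. finite F \<and> F \<subseteq> J \<and> (\<forall>a\<in>carr A. \<forall>z\<in>carr A. f (amul A a z) j = (\<Sum>g\<in>F. f a g * f (amul A (e g) z) j))"
proof -
  have c: "continuous_map (prod_topology (topo A) (topo A)) euclidean (\<lambda>(a,z). f (amul A a z) j)"
    using continuous_map_compose[OF mul_cont f_cont_j[OF j]] by (simp add: o_def case_prod_unfold)
  have "\<exists>F. finite F \<and> F \<subseteq> J \<and> (\<forall>a\<in>carr A. \<forall>z\<in>topspace (topo A). f (amul A a z) j = (\<Sum>g\<in>F. f a g * f (amul A (e g) z) j))"
  proof (rule expand[OF c, of "\<lambda>s z. smul A s z" "vzero A"])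
    show "\<And>a b z. a \<in> carr A \<Longrightarrow> b \<in> carr A \<Longrightarrow> z \<in> topspace (topo A) \<Longrightarrow>
      f (amul A (vadd A a b) z) j = f (amul A a z) j + f (amul A b z) j"
      using j by (simp add: top ldistr f_add_j mul_in)
    show "\<And>c a z. a \<in> carr A \<Longrightarrow> z \<in> topspace (topo A) \<Longrightarrow> f (amul A (smul A c a) z) j = c * f (amul A a z) j"
      using j by (simp add: top smul_l f_smul_j mul_in)
    show "\<And>z. z \<in> topspace (topo A) \<Longrightarrow> continuous_map euclidean (topo A) (\<lambda>s. smul A s z)"
      using smul_cont top by simp
    show "\<And>z. z \<in> topspace (topo A) \<Longrightarrow> smul A 0 z = vzero A" using vs_smul0[OF vs] top by simp
    show "\<And>s a z. a \<in> carr A \<Longrightarrow> z \<in> topspace (topo A) \<Longrightarrow> f (amul A a (smul A s z)) j = s * f (amul A a z) j"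
      using j by (simp add: top smul_r f_smul_j mul_in)
    show "vzero A \<in> topspace (topo A)" using zero_in top by simp
  qed
  then show ?thesis using top by simp
qed

lemma growth:
  assumes x: "x \<in> carr A" and j: "j \<in> J"
  shows "\<exists>M R. R \<ge> 0 \<and> (\<forall>n. norm (f (pw A x n) j) \<le> M * R ^ n)"
proof -
  obtain F where F: "finite F" "F \<subseteq> J"
    and ex: "\<And>a z. a\<in>carr A \<Longrightarrow> z\<in>carr A \<Longrightarrow> f (amul A a z) j = (\<Sum>g\<in>F. f a g * f (amul A (e g) z) j)"
    using mult_expand[OF j] by metis
  define u where "u n g = f (amul A (e g) (pw A x n)) j" for n g
  define K where "K n = (\<Sum>g\<in>F. norm (u n g))" for n
  define c where "c g g' = f (amul A (e g) x) g'" for g g'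
  define R where "R = (\<Sum>g\<in>F. \<Sum>g'\<in>F. norm (c g g'))"
  have R0: "R \<ge> 0" unfolding R_def by (intro sum_nonneg) auto
  have rec: "u (Suc n) g = (\<Sum>g'\<in>F. c g g' * u n g')" for n g
  proof -
    have "u (Suc n) g = f (amul A (amul A (e g) x) (pw A x n)) j"
      unfolding u_def by (simp add: assoc[OF e_in x pw_in[OF x]])
    also have "\<dots> = (\<Sum>g'\<in>F. c g g' * u n g')"
      unfolding c_def u_def by (rule ex[OF mul_in[OF e_in x] pw_in[OF x]])
    finally show ?thesis .
  qed
  have un: "norm (u n g') \<le> K n" if "g' \<in> F" for n g'
    unfolding K_def using F(1) that by (intro member_le_sum) auto
  have Kstep: "K (Suc n) \<le> R * K n" for n
  proof -
    have "K (Suc n) = (\<Sum>g\<in>F. norm (\<Sum>g'\<in>F. c g g' * u n g'))" unfolding K_def rec ..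
    also have "\<dots> \<le> (\<Sum>g\<in>F. \<Sum>g'\<in>F. norm (c g g') * K n)"
    proof (rule sum_mono)
      fix g assume "g \<in> F"
      have "norm (\<Sum>g'\<in>F. c g g' * u n g') \<le> (\<Sum>g'\<in>F. norm (c g g' * u n g'))" by (rule norm_sum)
      also have "\<dots> \<le> (\<Sum>g'\<in>F. norm (c g g') * K n)"
        by (rule sum_mono) (simp add: norm_mult mult_left_mono un)
      finally show "norm (\<Sum>g'\<in>F. c g g' * u n g') \<le> (\<Sum>g'\<in>F. norm (c g g') * K n)" .
    qed
    also have "\<dots> = R * K n" unfolding R_def by (simp add: sum_distrib_right)
    finally show ?thesis .
  qed
  have Kb: "K n \<le> K 0 * R ^ n" for n
  proof (induction n)
    case 0 then show ?case by simp
  next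
    case (Suc n)
    have "K (Suc n) \<le> R * K n" by (rule Kstep)
    also have "\<dots> \<le> R * (K 0 * R ^ n)" by (rule mult_left_mono[OF Suc R0])
    finally show ?case by (simp add: algebra_simps)
  qed
  define M where "M = (\<Sum>g\<in>F. norm (f (aone A) g)) * K 0"
  have "norm (f (pw A x n) j) \<le> M * R ^ n" for n
  proof -
    have "f (pw A x n) j = f (amul A (aone A) (pw A x n)) j" by (simp add: one_l pw_in[OF x])
    also have "\<dots> = (\<Sum>g\<in>F. f (aone A) g * u n g)" unfolding u_def by (rule ex[OF one_in pw_in[OF x]])
    finally have "norm (f (pw A x n) j) \<le> (\<Sum>g\<in>F. norm (f (aone A) g * u n g))" by (simp add: norm_sum)
    also have "\<dots> \<le> (\<Sum>g\<in>F. norm (f (aone A) g) * K n)"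
      by (rule sum_mono) (simp add: norm_mult mult_left_mono un)
    also have "\<dots> = (\<Sum>g\<in>F. norm (f (aone A) g)) * K n" by (simp add: sum_distrib_right)
    also have "\<dots> \<le> (\<Sum>g\<in>F. norm (f (aone A) g)) * (K 0 * R ^ n)"
      by (rule mult_left_mono[OF Kb]) (simp add: sum_nonneg)
    finally show ?thesis unfolding M_def by (simp add: algebra_simps)
  qed
  then show ?thesis using R0 by blast
qed

lemma exp_summable:
  assumes x: "x \<in> carr A" and j: "j \<in> J"
  shows "summable (\<lambda>n. norm (f (pw A x n) j * inverse (fact n)))"
proof -
  obtain M R where R: "R \<ge> 0" "\<And>n. norm (f (pw A x n) j) \<le> M * R ^ n" using growth[OF x j] by blast
  have s: "summable (\<lambda>n. M * (inverse (fact n) * R ^ n))"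
    by (rule summable_mult[OF summable_exp])
  show ?thesis
  proof (rule summable_comparison_test[OF _ s], intro exI allI impI)
    fix n
    have "norm (norm (f (pw A x n) j * inverse (fact n))) = norm (f (pw A x n) j) * inverse (fact n)"
      by (simp add: norm_mult norm_inverse)
    also have "\<dots> \<le> M * R ^ n * inverse (fact n)"
      by (rule mult_right_mono[OF R(2)]) simp
    finally show "norm (norm (f (pw A x n) j * inverse (fact n))) \<le> M * (inverse (fact n) * R ^ n)"
      by (simp add: algebra_simps)
  qed
qed

end


lemma pascal_aux:
  fixes q :: "nat \<Rightarrow> nat \<Rightarrow> 'a::comm_semiring_1"
  shows "(\<Sum>k\<le>n. of_nat (n choose k) * q k (Suc n - k)) = q 0 (Suc n) + (\<Sum>k\<le>n. of_nat (n choose Suc k) * q (Suc k) (n - k))"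
proof (cases n)
  case 0 then show ?thesis by simp
next
  case (Suc m)
  have "(\<Sum>k\<le>Suc m. of_nat (Suc m choose k) * q k (Suc (Suc m) - k)) = q 0 (Suc (Suc m)) + (\<Sum>k\<le>m. of_nat (Suc m choose Suc k) * q (Suc k) (Suc m - k))"
    by (subst sum.atMost_Suc_shift) simp
  moreover have "(\<Sum>k\<le>Suc m. of_nat (Suc m choose Suc k) * q (Suc k) (Suc m - k)) = (\<Sum>k\<le>m. of_nat (Suc m choose Suc k) * q (Suc k) (Suc m - k))"
    by (subst sum.atMost_Suc) (simp add: binomial_eq_0)
  ultimately show ?thesis using Suc by simp
qed

lemma pascal:
  fixes q :: "nat \<Rightarrow> nat \<Rightarrow> 'a::comm_semiring_1"
  shows "(\<Sum>k\<le>Suc n. of_nat (Suc n choose k) * q k (Suc n - k)) = (\<Sum>k\<le>n. of_nat (n choose k) * (q (Suc k) (n - k) + q k (Suc n - k)))"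
proof -
  have "(\<Sum>k\<le>Suc n. of_nat (Suc n choose k) * q k (Suc n - k)) = q 0 (Suc n) + (\<Sum>k\<le>n. of_nat (Suc n choose Suc k) * q (Suc k) (n - k))"
    by (subst sum.atMost_Suc_shift) simp
  also have "\<dots> = q 0 (Suc n) + (\<Sum>k\<le>n. of_nat (n choose k) * q (Suc k) (n - k)) + (\<Sum>k\<le>n. of_nat (n choose Suc k) * q (Suc k) (n - k))"
    by (simp add: sum.distrib distrib_right add.assoc)
  also have "\<dots> = (\<Sum>k\<le>n. of_nat (n choose k) * q (Suc k) (n - k)) + (\<Sum>k\<le>n. of_nat (n choose k) * q k (Suc n - k))"
    by (simp add: pascal_aux algebra_simps)
  also have "\<dots> = (\<Sum>k\<le>n. of_nat (n choose k) * (q (Suc k) (n - k) + q k (Suc n - k)))"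
    by (simp add: sum.distrib distrib_left)
  finally show ?thesis .
qed


context wca begin

lemma pw_smul: "x \<in> carr A \<Longrightarrow> pw A (smul A t x) n = smul A (t ^ n) (pw A x n)"
proof (induction n)
  case 0
  then show ?case using vs one_in by (simp add: vector_space_on_def)
next
  case (Suc n)
  have "pw A (smul A t x) (Suc n) = amul A (smul A t x) (smul A (t ^ n) (pw A x n))" using Suc by simp
  also have "\<dots> = smul A t (amul A x (smul A (t ^ n) (pw A x n)))"
    by (rule smul_l[OF Suc.prems smul_in[OF pw_in[OF Suc.prems]]])
  also have "\<dots> = smul A t (smul A (t ^ n) (amul A x (pw A x n)))"
    by (simp only: smul_r[OF Suc.prems pw_in[OF Suc.prems]])
  also have "\<dots> = smul A (t ^ Suc n) (amul A x (pw A x n))"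
    using vs mul_in[OF Suc.prems pw_in[OF Suc.prems]] by (simp add: vector_space_on_def)
  finally show ?case by simp
qed

end

locale hs = U: wca U JU fU + T: wca T JT fT
  for U :: "('k::{real_normed_field,banach},'u) talg" and JU :: "'j set" and fU
  and T :: "('k,'t) talg" and JT :: "'i set" and fT +
  fixes tens :: "'u \<Rightarrow> 'u \<Rightarrow> 't" and gam :: "'u \<Rightarrow> 't" and cu :: "'u \<Rightarrow> 'k"
  assumes cb: "cont_bilinear U T tens"
   and tmul: "\<And>a b c d. a \<in> carr U \<Longrightarrow> b \<in> carr U \<Longrightarrow> c \<in> carr U \<Longrightarrow> d \<in> carr U \<Longrightarrow>
        amul T (tens a b) (tens c d) = tens (amul U a c) (amul U b d)"
   and tone: "aone T = tens (aone U) (aone U)"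
   and gh: "alg_hom U T gam"
   and ch: "alg_hom U scalar_alg cu"
begin

lemma tens_in: "a \<in> carr U \<Longrightarrow> b \<in> carr U \<Longrightarrow> tens a b \<in> carr T"
  using cb by (simp add: cont_bilinear_def)
lemma tens_addl: "a \<in> carr U \<Longrightarrow> b \<in> carr U \<Longrightarrow> c \<in> carr U \<Longrightarrow> tens (vadd U a b) c = vadd T (tens a c) (tens b c)"
  using cb by (simp add: cont_bilinear_def linear_on_def)
lemma tens_smull: "a \<in> carr U \<Longrightarrow> c \<in> carr U \<Longrightarrow> tens (smul U s a) c = smul T s (tens a c)"
  using cb by (simp add: cont_bilinear_def linear_on_def)
lemma tens_addr: "a \<in> carr U \<Longrightarrow> b \<in> carr U \<Longrightarrow> c \<in> carr U \<Longrightarrow> tens c (vadd U a b) = vadd T (tens c a) (tens c b)"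
  using cb by (simp add: cont_bilinear_def linear_on_def)
lemma tens_smulr: "a \<in> carr U \<Longrightarrow> c \<in> carr U \<Longrightarrow> tens c (smul U s a) = smul T s (tens c a)"
  using cb by (simp add: cont_bilinear_def linear_on_def)
lemma tens_cont: "continuous_map (prod_topology (topo U) (topo U)) (topo T) (\<lambda>(x,y). tens x y)"
  using cb by (simp add: cont_bilinear_def)

lemma gam_in: "a \<in> carr U \<Longrightarrow> gam a \<in> carr T"
  using gh by (simp add: alg_hom_def linear_on_def)
lemma gam_add: "a \<in> carr U \<Longrightarrow> b \<in> carr U \<Longrightarrow> gam (vadd U a b) = vadd T (gam a) (gam b)"
  using gh by (simp add: alg_hom_def linear_on_def)
lemma gam_smul: "a \<in> carr U \<Longrightarrow> gam (smul U c a) = smul T c (gam a)"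
  using gh by (simp add: alg_hom_def linear_on_def)
lemma gam_mul: "a \<in> carr U \<Longrightarrow> b \<in> carr U \<Longrightarrow> gam (amul U a b) = amul T (gam a) (gam b)"
  using gh by (simp add: alg_hom_def)
lemma gam_one: "gam (aone U) = aone T"
  using gh by (simp add: alg_hom_def)
lemma gam_cont: "continuous_map (topo U) (topo T) gam"
  using gh by (simp add: alg_hom_def)

lemma cu_add: "a \<in> carr U \<Longrightarrow> b \<in> carr U \<Longrightarrow> cu (vadd U a b) = cu a + cu b"
  using ch by (simp add: alg_hom_def linear_on_def scalar_alg_def)
lemma cu_smul: "a \<in> carr U \<Longrightarrow> cu (smul U c a) = c * cu a"
  using ch by (simp add: alg_hom_def linear_on_def scalar_alg_def)
lemma cu_mul: "a \<in> carr U \<Longrightarrow> b \<in> carr U \<Longrightarrow> cu (amul U a b) = cu a * cu b"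
  using ch by (simp add: alg_hom_def scalar_alg_def)
lemma cu_one: "cu (aone U) = 1"
  using ch by (simp add: alg_hom_def scalar_alg_def)
lemma cu_cont: "continuous_map (topo U) euclidean cu"
  using ch by (simp add: alg_hom_def scalar_alg_def)

lemma gam_f_cont: "\<rho> \<in> JT \<Longrightarrow> continuous_map (topo U) euclidean (\<lambda>b. fT (gam b) \<rho>)"
  using continuous_map_compose[OF gam_cont T.f_cont_j] by (simp add: o_def)

lemma tensr_cont: "a \<in> carr U \<Longrightarrow> continuous_map (topo U) (topo T) (\<lambda>z. tens a z)"
proof -
  assume a: "a \<in> carr U"
  have "continuous_map (topo U) (topo U) (\<lambda>s. a)" using a U.top by (simp add: continuous_map_const)
  from continuous_map_pairedI[OF this continuous_map_id]
  have "continuous_map (topo U) (prod_topology (topo U) (topo U)) (\<lambda>s. (a, s))" by simp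
  from continuous_map_compose[OF this tens_cont] show ?thesis by (simp add: o_def)
qed

lemma tensr_f_cont: "a \<in> carr U \<Longrightarrow> \<rho> \<in> JT \<Longrightarrow> continuous_map (topo U) euclidean (\<lambda>z. fT (tens a z) \<rho>)"
  using continuous_map_compose[OF tensr_cont T.f_cont_j] by (simp add: o_def)

lemma mulT_f_cont: "Z \<in> carr T \<Longrightarrow> \<rho> \<in> JT \<Longrightarrow> continuous_map (topo T) euclidean (\<lambda>t. fT (amul T Z t) \<rho>)"
proof -
  assume Z: "Z \<in> carr T" and r: "\<rho> \<in> JT"
  have "continuous_map (topo T) (topo T) (\<lambda>s. Z)" using Z T.top by (simp add: continuous_map_const)
  from continuous_map_pairedI[OF this continuous_map_id]
  have "continuous_map (topo T) (prod_topology (topo T) (topo T)) (\<lambda>s. (Z, s))" by simp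
  from continuous_map_compose[OF continuous_map_compose[OF this T.mul_cont] T.f_cont_j[OF r]]
  show ?thesis by (simp add: o_def)
qed

lemma tens_expand:
  assumes r: "\<rho> \<in> JT"
  shows "\<exists>G. finite G \<and> G \<subseteq> JU \<and> (\<forall>a\<in>carr U. \<forall>z\<in>carr U. fT (tens a z) \<rho> = (\<Sum>g\<in>G. fU a g * fT (tens (U.e g) z) \<rho>))"
proof -
  have c: "continuous_map (prod_topology (topo U) (topo U)) euclidean (\<lambda>(a,z). fT (tens a z) \<rho>)"
    using continuous_map_compose[OF tens_cont T.f_cont_j[OF r]] by (simp add: o_def case_prod_unfold)
  have "\<exists>G. finite G \<and> G \<subseteq> JU \<and> (\<forall>a\<in>carr U. \<forall>z\<in>topspace (topo U). fT (tens a z) \<rho> = (\<Sum>g\<in>G. fU a g * fT (tens (U.e g) z) \<rho>))"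
  proof (rule U.expand[OF c, of "\<lambda>s z. smul U s z" "vzero U"])
    show "\<And>a b z. a \<in> carr U \<Longrightarrow> b \<in> carr U \<Longrightarrow> z \<in> topspace (topo U) \<Longrightarrow>
      fT (tens (vadd U a b) z) \<rho> = fT (tens a z) \<rho> + fT (tens b z) \<rho>"
      using r by (simp add: U.top tens_addl T.f_add_j tens_in)
    show "\<And>c a z. a \<in> carr U \<Longrightarrow> z \<in> topspace (topo U) \<Longrightarrow> fT (tens (smul U c a) z) \<rho> = c * fT (tens a z) \<rho>"
      using r by (simp add: U.top tens_smull T.f_smul_j tens_in)
    show "\<And>z. z \<in> topspace (topo U) \<Longrightarrow> continuous_map euclidean (topo U) (\<lambda>s. smul U s z)"
      using U.smul_cont U.top by simp
    show "\<And>z. z \<in> topspace (topo U) \<Longrightarrow> smul U 0 z = vzero U" using vs_smul0[OF U.vs] U.top by simp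
    show "\<And>s a z. a \<in> carr U \<Longrightarrow> z \<in> topspace (topo U) \<Longrightarrow> fT (tens a (smul U s z)) \<rho> = s * fT (tens a z) \<rho>"
      using r by (simp add: U.top tens_smulr T.f_smul_j tens_in)
    show "vzero U \<in> topspace (topo U)" using U.zero_in U.top by simp
  qed
  then show ?thesis using U.top by simp
qed

end



context hs begin

lemma mulT_expand:
  assumes Z: "Z \<in> carr T" and r: "\<rho> \<in> JT"
  shows "\<exists>I. finite I \<and> I \<subseteq> JT \<and> (\<forall>t\<in>carr T. fT (amul T Z t) \<rho> = (\<Sum>i\<in>I. fT t i * fT (amul T Z (T.e i)) \<rho>))"
  by (rule T.expand_fun[OF mulT_f_cont[OF Z r]])
     (simp_all add: T.rdistr T.f_add_j T.smul_r T.f_smul_j T.mul_in Z r)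

lemma gam_pw:
  assumes y: "y \<in> carr U" and gy: "gam y = vadd T (tens y (aone U)) (tens (aone U) y)"
  shows "\<forall>\<rho>\<in>JT. fT (gam (pw U y n)) \<rho> = (\<Sum>k\<le>n. of_nat (n choose k) * fT (tens (pw U y k) (pw U y (n - k))) \<rho>)"
proof (induction n)
  case 0
  show ?case by (simp add: gam_one tone)
next
  case (Suc n)
  let ?G = "gam (pw U y n)"
  define Q where "Q k = tens (pw U y k) (pw U y (n - k))" for k
  have G: "?G \<in> carr T" by (rule gam_in[OF U.pw_in[OF y]])
  have Qin: "Q k \<in> carr T" for k unfolding Q_def by (rule tens_in[OF U.pw_in[OF y] U.pw_in[OF y]])
  have lin: "fT (amul T Z ?G) \<rho> = (\<Sum>k\<le>n. of_nat (n choose k) * fT (amul T Z (Q k)) \<rho>)"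
    if Z: "Z \<in> carr T" and r: "\<rho> \<in> JT" for Z \<rho>
  proof -
    obtain I where I: "finite I" "I \<subseteq> JT"
      and ex: "\<And>t. t\<in>carr T \<Longrightarrow> fT (amul T Z t) \<rho> = (\<Sum>i\<in>I. fT t i * fT (amul T Z (T.e i)) \<rho>)"
      using mulT_expand[OF Z r] by metis
    have "fT (amul T Z ?G) \<rho> = (\<Sum>i\<in>I. fT ?G i * fT (amul T Z (T.e i)) \<rho>)" by (rule ex[OF G])
    also have "\<dots> = (\<Sum>i\<in>I. (\<Sum>k\<le>n. of_nat (n choose k) * fT (Q k) i) * fT (amul T Z (T.e i)) \<rho>)"
    proof (rule sum.cong[OF refl])
      fix i assume "i \<in> I" then have "i \<in> JT" using I by blast
      then show "fT ?G i * fT (amul T Z (T.e i)) \<rho> = (\<Sum>k\<le>n. of_nat (n choose k) * fT (Q k) i) * fT (amul T Z (T.e i)) \<rho>"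
        using Suc.IH unfolding Q_def by simp
    qed
    also have "\<dots> = (\<Sum>k\<le>n. of_nat (n choose k) * (\<Sum>i\<in>I. fT (Q k) i * fT (amul T Z (T.e i)) \<rho>))"
      by (simp add: sum_distrib_right sum_distrib_left mult.assoc sum.swap[of _ I])
    also have "\<dots> = (\<Sum>k\<le>n. of_nat (n choose k) * fT (amul T Z (Q k)) \<rho>)"
      by (simp only: ex[OF Qin, symmetric])
    finally show ?thesis .
  qed
  show ?case
  proof
    fix \<rho> assume r: "\<rho> \<in> JT"
    have one: "aone U \<in> carr U" by (rule U.one_in)
    have X: "tens y (aone U) \<in> carr T" and Y: "tens (aone U) y \<in> carr T" using tens_in y one by auto
    have "gam (pw U y (Suc n)) = amul T (vadd T (tens y (aone U)) (tens (aone U) y)) ?G"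
      using gam_mul[OF y U.pw_in[OF y]] gy by simp
    also have "\<dots> = vadd T (amul T (tens y (aone U)) ?G) (amul T (tens (aone U) y) ?G)"
      by (rule T.ldistr[OF X Y G])
    finally have "fT (gam (pw U y (Suc n))) \<rho> = fT (amul T (tens y (aone U)) ?G) \<rho> + fT (amul T (tens (aone U) y) ?G) \<rho>"
      using T.f_add_j[OF T.mul_in[OF X G] T.mul_in[OF Y G] r] by simp
    also have "\<dots> = (\<Sum>k\<le>n. of_nat (n choose k) * fT (amul T (tens y (aone U)) (Q k)) \<rho>) +
                    (\<Sum>k\<le>n. of_nat (n choose k) * fT (amul T (tens (aone U) y) (Q k)) \<rho>)"
      using lin[OF X r] lin[OF Y r] by simp
    also have "\<dots> = (\<Sum>k\<le>n. of_nat (n choose k) * (fT (tens (pw U y (Suc k)) (pw U y (n - k))) \<rho> +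
                           fT (tens (pw U y k) (pw U y (Suc n - k))) \<rho>))"
    proof -
      have "amul T (tens y (aone U)) (Q k) = tens (pw U y (Suc k)) (pw U y (n - k))" for k
        unfolding Q_def using tmul[OF y one U.pw_in[OF y] U.pw_in[OF y]] U.one_l[OF U.pw_in[OF y]] by simp
      moreover have "k \<le> n \<Longrightarrow> amul T (tens (aone U) y) (Q k) = tens (pw U y k) (pw U y (Suc n - k))" for k
        unfolding Q_def using tmul[OF one y U.pw_in[OF y] U.pw_in[OF y]] U.one_l[OF U.pw_in[OF y]]
        by (simp add: Suc_diff_le)
      ultimately show ?thesis by (simp add: sum.distrib distrib_left)
    qed
    also have "\<dots> = (\<Sum>k\<le>Suc n. of_nat (Suc n choose k) * fT (tens (pw U y k) (pw U y (Suc n - k))) \<rho>)"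
      by (rule pascal[symmetric])
    finally show "fT (gam (pw U y (Suc n))) \<rho> = (\<Sum>k\<le>Suc n. of_nat (Suc n choose k) * fT (tens (pw U y k) (pw U y (Suc n - k))) \<rho>)" .
  qed
qed

definition expv :: "'u \<Rightarrow> 'u" where
  "expv y = U.finv (\<lambda>j\<in>JU. \<Sum>n. fU (pw U y n) j * inverse (fact n))"

lemma expv_in: "expv y \<in> carr U" unfolding expv_def by (rule U.finv_r)

lemma cu_exp:
  assumes y: "y \<in> carr U" and cy: "cu y = 0"
  shows "cu (expv y) = 1"
proof -
  have "cu (expv y) = (\<Sum>n. cu (pw U y n) * inverse (fact n))"
    unfolding expv_def
    by (rule U.fun_series(2)[OF cu_cont cu_add cu_smul U.pw_in[OF y] U.exp_summable[OF y]])
  also have "(\<lambda>n. cu (pw U y n) * inverse (fact n)) = (\<lambda>n. if n = 0 then 1 else 0)"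
  proof
    fix n show "cu (pw U y n) * inverse (fact n) = (if n = 0 then 1 else 0)"
      by (cases n) (simp_all add: cu_one cu_mul[OF y U.pw_in[OF y]] cy)
  qed
  also have "(\<Sum>n. (if n = 0 then 1 else 0)) = (1::'k)"
    using sums_single[of 0 "\<lambda>_. 1::'k"] sums_unique by fastforce
  finally show ?thesis .
qed

lemma gam_exp:
  assumes y: "y \<in> carr U" and gy: "gam y = vadd T (tens y (aone U)) (tens (aone U) y)"
  shows "gam (expv y) = tens (expv y) (expv y)"
proof (rule T.f_ext[OF gam_in[OF expv_in] tens_in[OF expv_in expv_in]])
  fix \<rho> assume r: "\<rho> \<in> JT"
  define a where "a = expv y"
  have a: "a \<in> carr U" unfolding a_def by (rule expv_in)
  define q where "q k l = fT (tens (pw U y k) (pw U y l)) \<rho>" for k l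
  have pin: "\<And>n. pw U y n \<in> carr U" by (rule U.pw_in[OF y])
  have ga: "\<And>a b. a \<in> carr U \<Longrightarrow> b \<in> carr U \<Longrightarrow> fT (gam (vadd U a b)) \<rho> = fT (gam a) \<rho> + fT (gam b) \<rho>"
    by (simp add: gam_add T.f_add_j gam_in r)
  have gs: "\<And>c a. a \<in> carr U \<Longrightarrow> fT (gam (smul U c a)) \<rho> = c * fT (gam a) \<rho>"
    by (simp add: gam_smul T.f_smul_j gam_in r)
  have "fT (gam a) \<rho> = (\<Sum>n. fT (gam (pw U y n)) \<rho> * inverse (fact n))"
    unfolding a_def expv_def
    by (rule U.fun_series(2)[OF gam_f_cont[OF r] ga gs pin U.exp_summable[OF y]])
  also have "\<dots> = (\<Sum>n. \<Sum>k\<le>n. q k (n - k) * inverse (fact k * fact (n - k)))"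
  proof (rule arg_cong[where f=suminf], rule ext)
    fix n
    have "fT (gam (pw U y n)) \<rho> * inverse (fact n) = (\<Sum>k\<le>n. of_nat (n choose k) * q k (n - k)) * inverse (fact n)"
      using gam_pw[OF y gy, of n] r unfolding q_def by simp
    also have "\<dots> = (\<Sum>k\<le>n. q k (n - k) * (of_nat (n choose k) * inverse (fact n)))"
      by (simp add: sum_distrib_right sum_distrib_left algebra_simps)
    also have "\<dots> = (\<Sum>k\<le>n. q k (n - k) * inverse (fact k * fact (n - k)))"
    proof (rule sum.cong[OF refl])
      fix k assume "k \<in> {..n}" then have k: "k \<le> n" by simp
      have "of_nat (n choose k) * inverse (fact n :: 'k) = inverse (fact k * fact (n - k))"
        using binomial_fact[OF k, where 'a='k] by (simp add: field_simps)
      then show "q k (n - k) * (of_nat (n choose k) * inverse (fact n)) = q k (n - k) * inverse (fact k * fact (n - k))"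
        by simp
    qed
    finally show "fT (gam (pw U y n)) \<rho> * inverse (fact n) = (\<Sum>k\<le>n. q k (n - k) * inverse (fact k * fact (n - k)))" .
  qed
  also have "\<dots> = fT (tens a a) \<rho>"
  proof -
    obtain G where G: "finite G" "G \<subseteq> JU"
      and ex: "\<And>b z. b\<in>carr U \<Longrightarrow> z\<in>carr U \<Longrightarrow> fT (tens b z) \<rho> = (\<Sum>g\<in>G. fU b g * fT (tens (U.e g) z) \<rho>)"
      using tens_expand[OF r] by metis
    define \<alpha> where "\<alpha> g k = fU (pw U y k) g * inverse (fact k)" for g k
    define \<beta> where "\<beta> g l = fT (tens (U.e g) (pw U y l)) \<rho> * inverse (fact l)" for g l
    have ta: "\<And>g a b. a \<in> carr U \<Longrightarrow> b \<in> carr U \<Longrightarrow> fT (tens (U.e g) (vadd U a b)) \<rho> = fT (tens (U.e g) a) \<rho> + fT (tens (U.e g) b) \<rho>"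
      by (simp add: tens_addr T.f_add_j tens_in U.e_in r)
    have ts: "\<And>g c a. a \<in> carr U \<Longrightarrow> fT (tens (U.e g) (smul U c a)) \<rho> = c * fT (tens (U.e g) a) \<rho>"
      by (simp add: tens_smulr T.f_smul_j tens_in U.e_in r)
    have sa: "summable (\<lambda>k. norm (\<alpha> g k))" if "g \<in> G" for g
      unfolding \<alpha>_def by (rule U.exp_summable[OF y]) (use that G in blast)
    have sb: "summable (\<lambda>l. norm (\<beta> g l))" for g
      unfolding \<beta>_def
      by (rule U.fun_series(1)[OF tensr_f_cont[OF U.e_in r] ta ts pin U.exp_summable[OF y]])
    have fa: "fU a g = (\<Sum>k. \<alpha> g k)" if "g \<in> G" for g
      using that G unfolding a_def expv_def \<alpha>_def by (auto simp: U.finv_r)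
    have fb: "fT (tens (U.e g) a) \<rho> = (\<Sum>l. \<beta> g l)" for g
      unfolding a_def expv_def \<beta>_def
      by (rule U.fun_series(2)[OF tensr_f_cont[OF U.e_in r] ta ts pin U.exp_summable[OF y]])
    have "fT (tens a a) \<rho> = (\<Sum>g\<in>G. fU a g * fT (tens (U.e g) a) \<rho>)" by (rule ex[OF a a])
    also have "\<dots> = (\<Sum>g\<in>G. (\<Sum>k. \<alpha> g k) * (\<Sum>l. \<beta> g l))"
      using fa fb by simp
    also have "\<dots> = (\<Sum>g\<in>G. \<Sum>n. \<Sum>k\<le>n. \<alpha> g k * \<beta> g (n - k))"
      by (rule sum.cong[OF refl], rule Cauchy_product[OF sa sb])
    also have "\<dots> = (\<Sum>n. \<Sum>g\<in>G. \<Sum>k\<le>n. \<alpha> g k * \<beta> g (n - k))"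
      by (rule suminf_sum[symmetric], rule summable_Cauchy_product[OF sa sb])
    also have "\<dots> = (\<Sum>n. \<Sum>k\<le>n. q k (n - k) * inverse (fact k * fact (n - k)))"
    proof (rule arg_cong[where f=suminf], rule ext)
      fix n
      have "(\<Sum>g\<in>G. \<Sum>k\<le>n. \<alpha> g k * \<beta> g (n - k)) =
            (\<Sum>k\<le>n. (\<Sum>g\<in>G. fU (pw U y k) g * fT (tens (U.e g) (pw U y (n - k))) \<rho>) * inverse (fact k * fact (n - k)))"
        unfolding \<alpha>_def \<beta>_def
        by (subst sum.swap) (simp add: sum_distrib_left sum_distrib_right mult_ac)
      also have "\<dots> = (\<Sum>k\<le>n. q k (n - k) * inverse (fact k * fact (n - k)))"
        unfolding q_def by (simp only: ex[OF pin pin, symmetric])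
      finally show "(\<Sum>g\<in>G. \<Sum>k\<le>n. \<alpha> g k * \<beta> g (n - k)) = (\<Sum>k\<le>n. q k (n - k) * inverse (fact k * fact (n - k)))" .
    qed
    finally show ?thesis by simp
  qed
  finally show "fT (gam (expv y)) \<rho> = fT (tens (expv y) (expv y)) \<rho>" unfolding a_def .
qed

lemma nontriv:
  assumes x: "x \<in> carr U" and j0: "j0 \<in> JU" and nz: "fU x j0 \<noteq> 0"
  shows "\<exists>t. expv (smul U t x) \<noteq> aone U"
proof (rule ccontr)
  assume "\<not> (\<exists>t. expv (smul U t x) \<noteq> aone U)"
  then have all: "\<And>t. expv (smul U t x) = aone U" by blast
  define c where "c n = fU (pw U x n) j0 * inverse (fact n)" for n
  have pwj: "fU (pw U (smul U t x) n) j0 * inverse (fact n) = c n * t ^ n" for t n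
    unfolding c_def using U.pw_smul[OF x] U.f_smul_j[OF U.pw_in[OF x] j0] by simp
  have coord: "fU (expv (smul U t x)) j0 = (\<Sum>n. c n * t ^ n)" for t
    unfolding expv_def using j0 by (simp add: U.finv_r pwj)
  have summ: "summable (\<lambda>n. c n * t ^ n)" for t
  proof -
    have "summable (\<lambda>n. fU (pw U (smul U t x) n) j0 * inverse (fact n))"
      by (rule summable_norm_cancel, rule U.exp_summable[OF U.smul_in[OF x] j0])
    then show ?thesis by (simp add: pwj)
  qed
  have const: "(\<lambda>t. \<Sum>n. c n * t ^ n) = (\<lambda>t. fU (aone U) j0)"
    using coord all by (metis)
  have d1: "((\<lambda>t. \<Sum>n. c n * t ^ n) has_field_derivative (\<Sum>n. diffs c n * 0 ^ n)) (at 0)"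
    by (rule termdiffs_strong_converges_everywhere[OF summ])
  have d2: "((\<lambda>t. \<Sum>n. c n * t ^ n) has_field_derivative 0) (at 0)"
    unfolding const by (rule DERIV_const)
  have "(\<Sum>n. diffs c n * 0 ^ n) = 0" by (rule DERIV_unique[OF d1 d2])
  moreover have "(\<Sum>n. diffs c n * 0 ^ n) = diffs c 0" by (rule powser_zero)
  moreover have "diffs c 0 = fU x j0"
    unfolding diffs_def c_def using U.one_r[OF x] by simp
  ultimately show False using nz by simp
qed

end


theorem corollary3p6:
  fixes g :: "('k::{real_normed_field,banach}, 'g) tlie"
    and U :: "('k,'u) talg" and lam :: "'g \<Rightarrow> 'u"
    and T :: "('k,'t) talg" and tens :: "'u \<Rightarrow> 'u \<Rightarrow> 't"
    and gam :: "'u \<Rightarrow> 't" and cu :: "'u \<Rightarrow> 'k"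
  assumes "profinite_dim_lie g"
    and "carr g \<noteq> {vzero g}"
    and "enveloping_algebra g U lam"
    and "wc_tensor_algebra U T tens"
    and "alg_hom U T gam"
    and "\<forall>x\<in>carr g. gam (lam x) = vadd T (tens (lam x) (aone U)) (tens (aone U) (lam x))"
    and "alg_hom U scalar_alg cu"
    and "\<forall>x\<in>carr g. cu (lam x) = 0"
  shows "\<exists>a\<in>carr U. a \<noteq> aone U \<and> gam a = tens a a \<and> cu a = 1"
proof -
  note pd = assms(1) and ng = assms(2) and ea = assms(3) and wt = assms(4) and gh = assms(5)
    and glam = assms(6) and ch = assms(7) and clam = assms(8)
  have wU: "wc_algebra U" using ea unfolding enveloping_algebra_def by blast
  have wT: "wc_algebra T" using wt unfolding wc_tensor_algebra_def by blast
  obtain JU :: "'u set" and fU where iU: "linear_on U (power_space JU) fU"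
      "bij_betw fU (carr U) (carr (power_space JU))" "homeomorphic_map (topo U) (topo (power_space JU)) fU"
    using wU unfolding wc_algebra_def weakly_complete_def by blast
  obtain JT :: "'t set" and fT where iT: "linear_on T (power_space JT) fT"
      "bij_betw fT (carr T) (carr (power_space JT))" "homeomorphic_map (topo T) (topo (power_space JT)) fT"
    using wT unfolding wc_algebra_def weakly_complete_def by blast
  have tvU: "tvs U" and tvT: "tvs T" using wU wT unfolding wc_algebra_def weakly_complete_def by blast+
  interpret H: hs U JU fU T JT fT tens gam cu
  proof -
    show "hs U JU fU T JT fT tens gam cu"
      unfolding hs_def hs_axioms_def wca_def wca_axioms_def wcs_def
      using wU wT iU iT tvU tvT gh ch wt unfolding wc_tensor_algebra_def by blast
  qed
  have tvg: "tvs g" using pd unfolding profinite_dim_lie_def top_lie_algebra_def by blast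
  have vsg: "vector_space_on g" using tvg unfolding tvs_def by blast
  have z0: "vzero g \<in> carr g" using vsg unfolding vector_space_on_def by blast
  obtain v where v: "v \<in> carr g" "v \<noteq> vzero g" using ng z0 by blast
  have lm: "lie_morphism_into g U lam" and inj: "inj_on lam (carr g)"
    using ea unfolding enveloping_algebra_def by blast+
  have lam_in: "\<And>w. w \<in> carr g \<Longrightarrow> lam w \<in> carr U"
    using lm unfolding lie_morphism_into_def linear_on_def by blast
  have lam_sm: "\<And>c w. w \<in> carr g \<Longrightarrow> lam (smul g c w) = smul U c (lam w)"
    using lm unfolding lie_morphism_into_def linear_on_def by blast
  define x where "x = lam v"
  have x: "x \<in> carr U" unfolding x_def by (rule lam_in[OF v(1)])
  have "lam (vzero g) = vzero U"
    using lam_sm[OF v(1), of 0] vs_smul0[OF vsg v(1)] vs_smul0[OF H.U.vs x] unfolding x_def by simp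
  then have xnz: "x \<noteq> vzero U" using inj v z0 unfolding x_def inj_on_def by metis
  have "\<exists>j0\<in>JU. fU x j0 \<noteq> 0"
  proof (rule ccontr)
    assume "\<not> (\<exists>j0\<in>JU. fU x j0 \<noteq> 0)"
    then have "x = vzero U" by (intro H.U.f_ext[OF x H.U.zero_in]) (simp add: H.U.f_zero)
    then show False using xnz by simp
  qed
  then obtain j0 where j0: "j0 \<in> JU" "fU x j0 \<noteq> 0" by blast
  obtain t where t: "H.expv (smul U t x) \<noteq> aone U" using H.nontriv[OF x j0] by blast
  define y where "y = smul U t x"
  have y: "y \<in> carr U" unfolding y_def by (rule H.U.smul_in[OF x])
  have one: "aone U \<in> carr U" by (rule H.U.one_in)
  have gx: "gam x = vadd T (tens x (aone U)) (tens (aone U) x)" using glam v(1) unfolding x_def by blast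
  have "gam y = smul T t (vadd T (tens x (aone U)) (tens (aone U) x))"
    unfolding y_def using H.gam_smul[OF x] gx by simp
  also have "\<dots> = vadd T (smul T t (tens x (aone U))) (smul T t (tens (aone U) x))"
    using H.T.vs H.tens_in[OF x one] H.tens_in[OF one x] unfolding vector_space_on_def by blast
  also have "\<dots> = vadd T (tens y (aone U)) (tens (aone U) y)"
    unfolding y_def using H.tens_smull[OF x one] H.tens_smulr[OF x one] by simp
  finally have gy: "gam y = vadd T (tens y (aone U)) (tens (aone U) y)" .
  have cy: "cu y = 0" unfolding y_def using H.cu_smul[OF x] clam v(1) unfolding x_def by simp
  show ?thesis
  proof (intro bexI conjI)
    show "H.expv y \<noteq> aone U" using t unfolding y_def .
    show "gam (H.expv y) = tens (H.expv y) (H.expv y)" by (rule H.gam_exp[OF y gy])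
    show "cu (H.expv y) = 1" by (rule H.cu_exp[OF y cy])
    show "H.expv y \<in> carr U" by (rule H.expv_in)
  qed
qed



end
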